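(* Let $k\ge 1$ and $l\ge 1$ be integers and let $l_1=l_2=\cdots=l_k=l$. Then the generalized theta graph $\Theta_{l_1,l_2,\dots,l_k}$ is cyclically orderable.
   Context: The generalized theta graph $\Theta_{l_1,\dots,l_k}$ (with $l_1\le\cdots\le l_k$) is the graph obtained by joining two distinct vertices by $k$ internally vertex-disjoint paths of lengths $l_1,l_2,\dots,l_k$ (if several paths have length $1$ this yields parallel edges). A cyclic base ordering (CBO) of a connected graph $G$ is a bijection $\mathcal{O}:E(G)\to\{1,\dots,|E(G)|\}$ such that for every $i\in\{1,\dots,|E(G)|\}$ the edges $\mathcal{O}^{-1}(i),\dots,\mathcal{O}^{-1}(i+|V(G)|-2)$ (indices taken cyclically modulo $|E(G)|$) induce a spanning tree of $G$; $G$ is cyclically orderable if it has a CBO. *)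

theory Defs
  imports Main
begin

text \<open>Multigraphs (parallel edges allowed, no loops): a vertex set V, an edge set E,
  and an endpoint map ends :: 'e => 'v set with ends e = {u, v}.\<close>

definition adj_rel :: "'e set \<Rightarrow> ('e \<Rightarrow> 'v set) \<Rightarrow> ('v \<times> 'v) set" where
  "adj_rel F ends = {(x, y). \<exists>e\<in>F. ends e = {x, y}}"

definition reachable :: "'e set \<Rightarrow> ('e \<Rightarrow> 'v set) \<Rightarrow> 'v \<Rightarrow> 'v \<Rightarrow> bool" where
  "reachable F ends u v \<longleftrightarrow> (u, v) \<in> (adj_rel F ends)\<^sup>*"

definition acyclic_edges :: "'e set \<Rightarrow> ('e \<Rightarrow> 'v set) \<Rightarrow> bool" where
  "acyclic_edges F ends \<longleftrightarrow>
     (\<forall>e\<in>F. \<forall>u v. ends e = {u, v} \<longrightarrow> \<not> reachable (F - {e}) ends u v)"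

definition spanning_tree :: "'v set \<Rightarrow> 'e set \<Rightarrow> ('e \<Rightarrow> 'v set) \<Rightarrow> 'e set \<Rightarrow> bool" where
  "spanning_tree V E ends F \<longleftrightarrow>
     F \<subseteq> E \<and> (\<forall>u\<in>V. \<forall>v\<in>V. reachable F ends u v) \<and> acyclic_edges F ends"

definition cbo :: "'v set \<Rightarrow> 'e set \<Rightarrow> ('e \<Rightarrow> 'v set) \<Rightarrow> ('e \<Rightarrow> nat) \<Rightarrow> bool" where
  "cbo V E ends ord \<longleftrightarrow>
     bij_betw ord E {1..card E} \<and>
     (\<forall>i\<in>{1..card E}.
        spanning_tree V E ends
          {e\<in>E. \<exists>t < card V - 1. ord e = (i + t - 1) mod card E + 1})"

definition cyclically_orderable :: "'v set \<Rightarrow> 'e set \<Rightarrow> ('e \<Rightarrow> 'v set) \<Rightarrow> bool" where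
  "cyclically_orderable V E ends \<longleftrightarrow> (\<exists>ord. cbo V E ends ord)"

text \<open>Poles are Inl False and Inl True; internal vertex j (0<j<l) of path i is Inr (i,j).
  Edge (i,j), i<k, j<l, is the j-th edge of path i, joining its vertices j and j+1.\<close>
definition theta_vtx :: "nat \<Rightarrow> nat \<Rightarrow> nat \<Rightarrow> bool + nat \<times> nat" where
  "theta_vtx l i j = (if j = 0 then Inl False else if j = l then Inl True else Inr (i, j))"

definition theta_V :: "nat \<Rightarrow> nat \<Rightarrow> (bool + nat \<times> nat) set" where
  "theta_V k l = {Inl False, Inl True} \<union> {Inr (i, j) | i j. i < k \<and> 0 < j \<and> j < l}"

definition theta_E :: "nat \<Rightarrow> nat \<Rightarrow> (nat \<times> nat) set" where
  "theta_E k l = {(i, j). i < k \<and> j < l}"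

definition theta_ends :: "nat \<Rightarrow> nat \<times> nat \<Rightarrow> (bool + nat \<times> nat) set" where
  "theta_ends l e = {theta_vtx l (fst e) (snd e), theta_vtx l (fst e) (snd e + 1)}"

end

theory Submission
  imports Defs
begin

lemma adj_sym: "(x,y) \<in> adj_rel F ends \<Longrightarrow> (y,x) \<in> adj_rel F ends"
  unfolding adj_rel_def by (auto simp: insert_commute)

lemma reach_sym: "reachable F ends u v \<Longrightarrow> reachable F ends v u"
  unfolding reachable_def
proof (induction rule: rtrancl_induct)
  case base
  then show ?case by simp
next
  case (step y z)
  then show ?case using adj_sym converse_rtrancl_into_rtrancl by metis
qed

lemma reach_trans: "reachable F ends u v \<Longrightarrow> reachable F ends v w \<Longrightarrow> reachable F ends u w"
  unfolding reachable_def by (rule rtrancl_trans)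

lemma reach_edge: "e \<in> F \<Longrightarrow> ends e = {x,y} \<Longrightarrow> reachable F ends x y"
  unfolding reachable_def adj_rel_def by auto

lemma theta_inv:
  assumes "\<forall>a j. (a,j) \<in> F \<longrightarrow> L (theta_vtx l a j) = L (theta_vtx l a (Suc j))"
    and "reachable F (theta_ends l) u v"
  shows "L u = L v"
proof -
  have "(u,v) \<in> (adj_rel F (theta_ends l))\<^sup>*" using assms(2) unfolding reachable_def .
  then show ?thesis
  proof (induction rule: rtrancl_induct)
    case base
    then show ?case by simp
  next
    case (step y z)
    then obtain a j where aj: "(a,j) \<in> F" "theta_ends l (a,j) = {y,z}"
      unfolding adj_rel_def by auto
    then have "L y = L z" using assms(1) unfolding theta_ends_def
      by (auto simp: doubleton_eq_iff)
    then show ?case using step by simp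
  qed
qed

lemma path_reach:
  assumes "p \<le> q" "\<forall>j. p \<le> j \<and> j < q \<longrightarrow> (a,j) \<in> F"
  shows "reachable F (theta_ends l) (theta_vtx l a p) (theta_vtx l a q)"
  using assms
proof (induction q rule: dec_induct)
  case base
  then show ?case by (simp add: reachable_def)
next
  case (step q)
  have "reachable F (theta_ends l) (theta_vtx l a q) (theta_vtx l a (Suc q))"
    using step by (intro reach_edge[of "(a,q)"]) (auto simp: theta_ends_def)
  then show ?case using step reach_trans by fastforce
qed

lemma main_tree:
  assumes "k \<ge> 1" "l \<ge> 1" "c < k" "\<forall>a<k. g a < l"
  shows "spanning_tree (theta_V k l) (theta_E k l) (theta_ends l)
           {(a,b)\<in>theta_E k l. a = c \<or> b \<noteq> g a}"
    (is "spanning_tree ?V ?E ?en ?F")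
proof -
  have lnz: "l \<noteq> 0" using assms by simp
  have v0: "theta_vtx l a 0 = Inl False" for a by (simp add: theta_vtx_def)
  have vl: "theta_vtx l a l = Inl True" for a using lnz by (simp add: theta_vtx_def)
  have vj: "0 < j \<Longrightarrow> j < l \<Longrightarrow> theta_vtx l a j = Inr (a,j)" for a j by (simp add: theta_vtx_def)
  have top: "reachable ?F ?en (Inl False) (Inl True)"
    using path_reach[of 0 l c ?F l] assms by (auto simp: v0 vl theta_E_def)
  have fromF: "reachable ?F ?en (Inl False) v" if vV: "v \<in> ?V" for v
  proof -
    consider "v = Inl False" | "v = Inl True" | a j where "v = Inr (a,j)" "a < k" "0 < j" "j < l"
      using vV unfolding theta_V_def by auto
    then show ?thesis
    proof cases
      case 1
      then show ?thesis by (simp add: reachable_def)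
    next
      case 2
      then show ?thesis using top by simp
    next
      case 3
      show ?thesis
      proof (cases "a = c \<or> j \<le> g a")
        case True
        then show ?thesis
          using path_reach[of 0 j a ?F l] 3 by (auto simp: v0 vj theta_E_def)
      next
        case False
        then have "reachable ?F ?en (Inr (a,j)) (Inl True)"
          using path_reach[of j l a ?F l] 3 by (auto simp: vl vj theta_E_def)
        then have "reachable ?F ?en (Inl True) (Inr (a,j))" by (rule reach_sym)
        then show ?thesis using reach_trans[OF top] 3(1) by simp
      qed
    qed
  qed
  have conn: "\<forall>u\<in>?V. \<forall>v\<in>?V. reachable ?F ?en u v"
  proof (intro ballI)
    fix u v assume uV: "u \<in> ?V" and vV: "v \<in> ?V"
    have "reachable ?F ?en u (Inl False)" by (rule reach_sym, rule fromF, rule uV)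
    moreover have "reachable ?F ?en (Inl False) v" by (rule fromF, rule vV)
    ultimately show "reachable ?F ?en u v" by (rule reach_trans)
  qed
  have acyc: "\<not> reachable (?F - {(a,b)}) ?en u v"
    if ab: "(a,b) \<in> ?F" and uv: "?en (a,b) = {u,v}" for a b u v
  proof -
    have abE: "a < k" "b < l" using ab by (auto simp: theta_E_def)
    have key: "\<not> reachable (?F - {(a,b)}) ?en (theta_vtx l a b) (theta_vtx l a (Suc b))"
    proof (cases "a = c")
      case True
      define h where "h = g(c := b)"
      have hl: "a' < k \<Longrightarrow> h a' < l" for a' using assms abE True by (auto simp: h_def)
      define L where "L = (\<lambda>v::bool + nat \<times> nat. case v of Inl bb \<Rightarrow> \<not> bb | Inr (a',p) \<Rightarrow> p \<le> h a')"
      have Lv: "L (theta_vtx l a' p) = (p \<le> h a')" if "a' < k" "p \<le> l" for a' p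
        using hl[OF that(1)] that by (auto simp: L_def theta_vtx_def)
      have inv: "\<forall>a' j. (a',j) \<in> ?F - {(a,b)} \<longrightarrow> L (theta_vtx l a' j) = L (theta_vtx l a' (Suc j))"
      proof (intro allI impI)
        fix a' j assume H: "(a',j) \<in> ?F - {(a,b)}"
        then have "a' < k" "j < l" "j \<noteq> h a'" using True by (auto simp: theta_E_def h_def)
        then show "L (theta_vtx l a' j) = L (theta_vtx l a' (Suc j))" by (simp add: Lv, linarith)
      qed
      have "L (theta_vtx l a b) \<noteq> L (theta_vtx l a (Suc b))"
        using abE True by (simp add: Lv h_def)
      moreover have "\<not> ?thesis \<Longrightarrow> L (theta_vtx l a b) = L (theta_vtx l a (Suc b))"
        by (rule theta_inv[OF inv]) simp
      ultimately show ?thesis by blast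
    next
      case False
      then have bg: "b \<noteq> g a" using ab by simp
      define lo where "lo = min b (g a)"
      define hi where "hi = max b (g a)"
      have hil: "hi < l" using assms abE by (simp add: hi_def)
      define L where "L = (\<lambda>v::bool + nat \<times> nat. case v of Inl bb \<Rightarrow> False | Inr (a',p) \<Rightarrow> a' = a \<and> lo < p \<and> p \<le> hi)"
      have Lv: "L (theta_vtx l a' p) = (a' = a \<and> lo < p \<and> p \<le> hi)" if "p \<le> l" for a' p
        using hil that by (auto simp: L_def theta_vtx_def)
      have inv: "\<forall>a' j. (a',j) \<in> ?F - {(a,b)} \<longrightarrow> L (theta_vtx l a' j) = L (theta_vtx l a' (Suc j))"
      proof (intro allI impI)
        fix a' j assume H: "(a',j) \<in> ?F - {(a,b)}"
        then have "j < l" "a' = a \<Longrightarrow> j \<noteq> lo \<and> j \<noteq> hi" using False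
          by (auto simp: theta_E_def lo_def hi_def min_def max_def)
        then show "L (theta_vtx l a' j) = L (theta_vtx l a' (Suc j))" by (auto simp: Lv)
      qed
      have "L (theta_vtx l a b) \<noteq> L (theta_vtx l a (Suc b))"
        using abE bg by (auto simp: Lv lo_def hi_def min_def max_def)
      moreover have "\<not> ?thesis \<Longrightarrow> L (theta_vtx l a b) = L (theta_vtx l a (Suc b))"
        by (rule theta_inv[OF inv]) simp
      ultimately show ?thesis by blast
    qed
    have "(u = theta_vtx l a b \<and> v = theta_vtx l a (Suc b)) \<or> (v = theta_vtx l a b \<and> u = theta_vtx l a (Suc b))"
      using uv by (auto simp: theta_ends_def doubleton_eq_iff)
    then show ?thesis
    proof
      assume "u = theta_vtx l a b \<and> v = theta_vtx l a (Suc b)"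
      then show ?thesis using key by simp
    next
      assume H: "v = theta_vtx l a b \<and> u = theta_vtx l a (Suc b)"
      show ?thesis
      proof
        assume "reachable (?F - {(a,b)}) ?en u v"
        then have "reachable (?F - {(a,b)}) ?en v u" by (rule reach_sym)
        then show False using key H by simp
      qed
    qed
  qed
  have sub: "?F \<subseteq> ?E" by auto
  have "acyclic_edges ?F ?en" unfolding acyclic_edges_def
  proof (intro ballI allI impI)
    fix e u v assume "e \<in> ?F" "?en e = {u,v}"
    then show "\<not> reachable (?F - {e}) ?en u v" using acyc[of "fst e" "snd e" u v] by simp
  qed
  then show ?thesis unfolding spanning_tree_def using sub conn by blast
qed



lemma mul_le_iff:
  fixes x s k m :: nat
  assumes "s < k"
  shows "(x*k + s \<le> m*k) = (x < m \<or> (x = m \<and> s = 0))"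
proof (cases "x < m")
  case True
  then have "Suc x * k \<le> m * k" by (intro mult_le_mono1) simp
  then show ?thesis using True assms by simp
next
  case False
  show ?thesis
  proof (cases "x = m")
    case True then show ?thesis by simp
  next
    case F2: False
    with False have "Suc m \<le> x" by simp
    then have "Suc m * k \<le> x * k" by (intro mult_le_mono1)
    then show ?thesis using False F2 assms by simp
  qed
qed

lemma mod_two:
  fixes x s k l :: nat
  assumes "s < k" "x < 2*l"
  shows "(x*k + s) mod (l*k) = (if x < l then x else x - l)*k + s"
proof (cases "x < l")
  case True
  then have "Suc x * k \<le> l * k" by (intro mult_le_mono1) simp
  then have "x*k + s < l*k" using assms by simp
  then show ?thesis using True by simp
next
  case False
  then have "l*k \<le> x*k" by (intro mult_le_mono1) simp
  then have e: "x*k + s = ((x-l)*k + s) + l*k"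
    by (simp only: diff_mult_distrib)
  have "x - l < l" using False assms by simp
  then have "Suc (x-l) * k \<le> l * k" by (intro mult_le_mono1) simp
  then have "(x-l)*k + s < l*k" using assms by simp
  moreover have "(x*k + s) mod (l*k) = ((x-l)*k + s) mod (l*k)"
    unfolding e by (rule mod_add_self2)
  ultimately show ?thesis using False by simp
qed

lemma window_iff:
  fixes N p q M :: nat
  assumes "p < N" "q < N" "M \<le> N"
  shows "(\<exists>t<M. p = (q+t) mod N) \<longleftrightarrow> (p + N - q) mod N < M"
proof
  assume "\<exists>t<M. p = (q+t) mod N"
  then obtain t where t: "t < M" "p = (q+t) mod N" by blast
  have "(p + N - q) mod N = ((q + t) mod N + N - q) mod N" using t by simp
  also have "\<dots> = t"
  proof (cases "q + t < N")
    case True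
    then show ?thesis using t assms by simp
  next
    case False
    then have "(q + t) mod N = q + t - N" using t assms by (simp add: le_mod_geq)
    then show ?thesis using t assms False by simp
  qed
  finally show "(p + N - q) mod N < M" using t assms by simp
next
  assume H: "(p + N - q) mod N < M"
  have "(q + (p + N - q) mod N) mod N = (q + (p + N - q)) mod N" by (simp add: mod_add_right_eq)
  also have "\<dots> = (p + N) mod N" using assms by simp
  also have "\<dots> = p" using assms by simp
  finally show "\<exists>t<M. p = (q+t) mod N" using H by (intro exI[of _ "(p + N - q) mod N"]) simp
qed

definition gg :: "nat \<Rightarrow> nat \<Rightarrow> nat \<Rightarrow> nat \<Rightarrow> nat" where
  "gg k l q a = (if q mod k < a then (if q div k = 0 then l - 1 else q div k - 1) else q div k)"

lemma arith_main:
  fixes k l a b q :: nat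
  assumes "k \<ge> 1" "l \<ge> 1" "a < k" "b < l" "q < l*k"
  shows "((b*k+a) + l*k - q) mod (l*k) < l*k - k + 1 \<longleftrightarrow> (a = q mod k \<or> b \<noteq> gg k l q a)"
proof -
  define qd where "qd = q div k"
  define c where "c = q mod k"
  have qe: "q = qd*k + c" by (simp add: qd_def c_def)
  have qdl: "qd < l" unfolding qd_def using assms(5) by (simp add: less_mult_imp_div_less)
  have ck: "c < k" using assms(1) by (simp add: c_def)
  have lk: "l*k - k = (l-1)*k" by (simp add: diff_mult_distrib)
  have lhs: "(X < l*k - k + 1) = (X \<le> (l-1)*k)" for X unfolding lk by linarith
  show ?thesis
  proof (cases "c \<le> a")
    case True
    define s where "s = a - c"
    define x where "x = b + l - qd"
    have sk: "s < k" using assms s_def by simp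
    have "x*k + s + q = (x + qd)*k + a" using True by (simp add: qe s_def add_mult_distrib)
    also have "\<dots> = (b + l)*k + a" using qdl by (simp add: x_def)
    finally have X: "(b*k+a) + l*k - q = x*k + s" by (simp add: add_mult_distrib)
    have x2: "x < 2*l" using assms qdl by (simp add: x_def)
    have "((b*k+a) + l*k - q) mod (l*k) = (if x < l then x else x - l)*k + s"
      unfolding X by (rule mod_two[OF sk x2])
    then have "(((b*k+a) + l*k - q) mod (l*k) < l*k - k + 1) =
       ((if x < l then x else x - l) < l - 1 \<or> ((if x < l then x else x - l) = l - 1 \<and> s = 0))"
      using lhs mul_le_iff[OF sk] by simp
    then show ?thesis using True assms qdl
      by (auto simp: gg_def x_def s_def c_def[symmetric] qd_def[symmetric])
  next
    case False
    define s where "s = k + a - c"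
    define x where "x = b + l - qd - 1"
    have sk: "s < k" and s0: "s \<noteq> 0" using assms s_def False ck by simp_all
    have "x*k + s + q = (x + qd)*k + k + a" using False ck by (simp add: qe s_def add_mult_distrib)
    also have "\<dots> = (x + qd + 1)*k + a" by (simp add: add_mult_distrib)
    also have "x + qd + 1 = b + l" using qdl by (simp add: x_def)
    finally have "x*k + s + q = (b + l)*k + a" .
    then have X: "(b*k+a) + l*k - q = x*k + s" by (simp add: add_mult_distrib)
    have x2: "x < 2*l" using assms qdl by (simp add: x_def)
    have "((b*k+a) + l*k - q) mod (l*k) = (if x < l then x else x - l)*k + s"
      unfolding X by (rule mod_two[OF sk x2])
    then have "(((b*k+a) + l*k - q) mod (l*k) < l*k - k + 1) =
       ((if x < l then x else x - l) < l - 1 \<or> ((if x < l then x else x - l) = l - 1 \<and> s = 0))"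
      using lhs mul_le_iff[OF sk] by simp
    then show ?thesis using False assms qdl s0
      by (auto simp: gg_def x_def c_def[symmetric] qd_def[symmetric])
  qed
qed



lemma card_E: "card (theta_E k l) = k * l"
proof -
  have "theta_E k l = {..<k} \<times> {..<l}" by (auto simp: theta_E_def)
  then show ?thesis by (simp add: card_cartesian_product)
qed

lemma card_V: "card (theta_V k l) = 2 + k * (l - 1)"
proof -
  have e: "theta_V k l = {Inl False, Inl True} \<union> Inr ` ({..<k} \<times> {1..<l})"
    by (auto simp: theta_V_def)
  have "card (Inr ` ({..<k} \<times> {1..<l}) :: (bool + nat \<times> nat) set) = k * (l - 1)"
    by (simp add: card_image card_cartesian_product)
  moreover have "card ({Inl False, Inl True} :: (bool + nat \<times> nat) set) = 2" by simp
  ultimately show ?thesis unfolding e by (subst card_Un_disjoint) auto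
qed

theorem mainTheorem9:
  fixes k l :: nat
  assumes "k \<ge> 1" and "l \<ge> 1"
  shows "cyclically_orderable (theta_V k l) (theta_E k l) (theta_ends l)"
proof -
  define ord where "ord = (\<lambda>e::nat \<times> nat. snd e * k + fst e + 1)"
  define N where "N = k * l"
  have cE: "card (theta_E k l) = N" by (simp add: card_E N_def)
  have cV: "card (theta_V k l) - 1 = l*k - k + 1"
  proof -
    have "k * (l - 1) = l*k - k" using diff_mult_distrib2[of k l 1] by (simp add: mult.commute)
    moreover have "k \<le> l*k" using assms by simp
    ultimately show ?thesis by (simp add: card_V)
  qed
  have lt: "b*k + a < l*k" if "a < k" "b < l" for a b
  proof -
    have "Suc b * k \<le> l * k" using that by (intro mult_le_mono1) simp
    then show ?thesis using that by simp
  qed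
  have bij: "bij_betw ord (theta_E k l) {1..N}"
  proof (rule bij_betw_byWitness[where f' = "\<lambda>n. ((n-1) mod k, (n-1) div k)"])
    show "\<forall>e\<in>theta_E k l. ((ord e - 1) mod k, (ord e - 1) div k) = e"
      by (auto simp: ord_def theta_E_def)
    show "\<forall>n\<in>{1..N}. ord ((n-1) mod k, (n-1) div k) = n"
      by (auto simp: ord_def)
    show "ord ` theta_E k l \<subseteq> {1..N}"
      using lt by (auto simp: ord_def theta_E_def N_def mult.commute Suc_le_eq)
    show "(\<lambda>n. ((n-1) mod k, (n-1) div k)) ` {1..N} \<subseteq> theta_E k l"
    proof
      fix e assume "e \<in> (\<lambda>n. ((n-1) mod k, (n-1) div k)) ` {1..N}"
      then obtain n where n: "n \<in> {1..N}" "e = ((n-1) mod k, (n-1) div k)" by blast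
      have "n - 1 < l * k" using n unfolding N_def by (simp add: mult.commute, linarith)
      then have "(n-1) div k < l" by (simp add: less_mult_imp_div_less)
      then show "e \<in> theta_E k l" using n assms by (simp add: theta_E_def)
    qed
  qed
  have win: "spanning_tree (theta_V k l) (theta_E k l) (theta_ends l)
          {e\<in>theta_E k l. \<exists>t < card (theta_V k l) - 1. ord e = (i + t - 1) mod card (theta_E k l) + 1}"
    if i: "i \<in> {1..card (theta_E k l)}" for i
  proof -
    define q where "q = i - 1"
    have qN: "q < l*k" using i cE by (simp add: q_def N_def mult.commute, linarith)
    have eq: "{e\<in>theta_E k l. \<exists>t < card (theta_V k l) - 1. ord e = (i + t - 1) mod card (theta_E k l) + 1}
      = {(a,b)\<in>theta_E k l. a = q mod k \<or> b \<noteq> gg k l q a}"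
    proof -
      have memb: "(\<exists>t < card (theta_V k l) - 1. ord (a,b) = (i + t - 1) mod card (theta_E k l) + 1)
         \<longleftrightarrow> (a = q mod k \<or> b \<noteq> gg k l q a)" if ab: "a < k" "b < l" for a b
      proof -
        have "(\<exists>t < card (theta_V k l) - 1. ord (a,b) = (i + t - 1) mod card (theta_E k l) + 1)
           \<longleftrightarrow> (\<exists>t < l*k - k + 1. b*k + a = (q + t) mod (l*k))"
          using i unfolding cV cE by (simp add: ord_def N_def q_def mult.commute)
        also have "\<dots> \<longleftrightarrow> (b*k+a + l*k - q) mod (l*k) < l*k - k + 1"
          by (rule window_iff) (use lt[OF ab] qN assms in auto)
        also have "\<dots> \<longleftrightarrow> (a = q mod k \<or> b \<noteq> gg k l q a)"
          by (rule arith_main) (use ab qN assms in auto)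
        finally show ?thesis .
      qed
      show ?thesis
      proof (intro set_eqI)
        fix e :: "nat \<times> nat"
        obtain a b where e: "e = (a,b)" by fastforce
        show "e \<in> {e\<in>theta_E k l. \<exists>t < card (theta_V k l) - 1. ord e = (i + t - 1) mod card (theta_E k l) + 1}
          \<longleftrightarrow> e \<in> {(a,b)\<in>theta_E k l. a = q mod k \<or> b \<noteq> gg k l q a}"
        proof (cases "a < k \<and> b < l")
          case True
          then show ?thesis unfolding e using memb[of a b] by (simp add: theta_E_def)
        next
          case False
          then show ?thesis unfolding e by (auto simp: theta_E_def)
        qed
      qed
    qed
    have "q div k < l" using qN by (simp add: less_mult_imp_div_less)
    then have "\<forall>a<k. gg k l q a < l"
      using assms by (auto simp: gg_def)
    then show ?thesis unfolding eq
      using main_tree[OF assms, of "q mod k" "gg k l q"] assms by simp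
  qed
  have "cbo (theta_V k l) (theta_E k l) (theta_ends l) ord"
    unfolding cbo_def using bij win cE by simp
  then show ?thesis unfolding cyclically_orderable_def by blast
qed

end
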